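(* Let $p$ be a prime, $k\ge1$, $n=4k$, and let $f:\mathbb{F}_{p^n}\to\mathbb{F}_{p^{2k}}$ be $f(x)=T^n_k(x)+T^n_{2k}(x)$. Then: (1) every $\gamma\in\mathbb{F}_{p^n}^*$ with $\gamma+\gamma^{p^{2k}}=0$ is a $0$-translator of $f$, i.e. $f(x+u\gamma)-f(x)=0$ for all $x\in\mathbb{F}_{p^n}$ and all $u\in\mathbb{F}_{p^{2k}}$; (2) if $p=2$, then every $\gamma\in\mathbb{F}_{2^n}^*$ is a $(k,\gamma^{2^k}+\gamma^{2^{3k}})$-Frobenius translator of $f$, i.e. $f(x+u\gamma)-f(x)=u^{2^k}(\gamma^{2^k}+\gamma^{2^{3k}})$ for all $x\in\mathbb{F}_{2^n}$ and all $u\in\mathbb{F}_{2^{2k}}$.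
   Context: For $m\mid n$, $T^n_m:\mathbb{F}_{p^n}\to\mathbb{F}_{p^m}$ denotes the relative trace $T^n_m(\beta)=\beta+\beta^{p^m}+\dots+\beta^{p^{(n/m-1)m}}$. For a function $f:\mathbb{F}_{p^n}\to\mathbb{F}_{p^{m}}$ with $m\mid n$, $\gamma\in\mathbb{F}_{p^n}^*$, $b\in\mathbb{F}_{p^m}$ and $i\in\{0,\dots,m-1\}$, $\gamma$ is an $(i,b)$-Frobenius translator of $f$ (with respect to $\mathbb{F}_{p^m}$) if $f(x+u\gamma)-f(x)=u^{p^i}b$ for all $x\in\mathbb{F}_{p^n}$ and all $u\in\mathbb{F}_{p^m}$; a $0$-translator is one with $b=0$. *)

theory Defs
  imports "HOL-Computational_Algebra.Primes"
begin

text \<open>The finite field F_{p^n} is modelled as a finite field type 'a with CARD('a) = p^n.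
  The subfield F_{p^m} (for m dividing n) is the set of elements fixed by x \<mapsto> x^(p^m).\<close>

definition subfld :: "nat \<Rightarrow> nat \<Rightarrow> 'a::field set" where
  "subfld p m = {x. x ^ (p ^ m) = x}"

definition rel_trace :: "nat \<Rightarrow> nat \<Rightarrow> nat \<Rightarrow> 'a::field \<Rightarrow> 'a" where
  "rel_trace p n m \<beta> = (\<Sum>i<n div m. \<beta> ^ (p ^ (i * m)))"

definition frob_translator ::
    "nat \<Rightarrow> nat \<Rightarrow> ('a::field \<Rightarrow> 'a) \<Rightarrow> 'a \<Rightarrow> nat \<Rightarrow> 'a \<Rightarrow> bool" where
  "frob_translator p m f \<gamma> i b \<longleftrightarrow>
     \<gamma> \<noteq> 0 \<and> b \<in> subfld p m \<and> i < m \<and>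
     (\<forall>x. \<forall>u \<in> subfld p m. f (x + u * \<gamma>) - f x = u ^ (p ^ i) * b)"

end

theory Submission
  imports Defs "HOL-Number_Theory.Residues"
begin

lemma card_pow_same:
  fixes x :: "'a::{finite,field}"
  shows "x ^ card (UNIV :: 'a set) = x"
proof (cases "x = 0")
  case False
  have "x * (\<Prod>y\<in>UNIV-{0}. x * y) = x * x ^ (card (UNIV :: 'a set) - 1) * \<Prod>(UNIV-{0})"
    by (simp add: prod.distrib mult_ac)
  also have "x * x ^ (card (UNIV :: 'a set) - 1) = x ^ Suc (card (UNIV :: 'a set) - 1)"
    by (subst power_Suc) auto
  also have "Suc (card (UNIV :: 'a set) - 1) = card (UNIV :: 'a set)"
    using finite_UNIV_card_ge_0[where ?'a = 'a] by simp
  also have "(\<Prod>y\<in>UNIV-{0}. x * y) = (\<Prod>y\<in>UNIV-{0}. y)"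
    by (rule prod.reindex_bij_witness[of _ "\<lambda>y. y / x" "\<lambda>y. x * y"]) (use False in auto)
  finally show ?thesis
    by simp
qed (use finite_UNIV_card_ge_0[where ?'a = 'a] in auto)

lemma char_is_p:
  assumes "prime p" "card (UNIV::'a::{finite,field} set) = p ^ n"
  shows "CHAR('a) = p"
proof -
  have pr: "prime CHAR('a)"
  proof -
    have "CHAR('a) > 0" by (rule finite_imp_CHAR_pos) simp
    then show ?thesis using prime_CHAR_semidom by blast
  qed
  have "CHAR('a) dvd card (UNIV::'a set)" by (rule CHAR_dvd_CARD)
  then have "CHAR('a) dvd p ^ n" using assms(2) by simp
  then show ?thesis using pr assms(1)
    using prime_dvd_power primes_dvd_imp_eq by blast
qed

lemma pow_pow: "((x::'a::comm_monoid_mult) ^ (p ^ a)) ^ (p ^ b) = x ^ (p ^ (a + b))"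
  by (simp add: power_mult power_add)

theorem proposition2:
  fixes p k :: nat and f :: "'a::{finite,field} \<Rightarrow> 'a"
  assumes "prime p" and "k \<ge> 1" and "card (UNIV::'a set) = p ^ (4 * k)"
    and "\<And>x. f x = rel_trace p (4 * k) k x + rel_trace p (4 * k) (2 * k) x"
  shows "(\<forall>\<gamma>::'a. \<gamma> \<noteq> 0 \<and> \<gamma> + \<gamma> ^ (p ^ (2 * k)) = 0 \<longrightarrow>
            frob_translator p (2 * k) f \<gamma> 0 0)
       \<and> (p = 2 \<longrightarrow> (\<forall>\<gamma>::'a. \<gamma> \<noteq> 0 \<longrightarrow>
            frob_translator p (2 * k) f \<gamma> k (\<gamma> ^ (2 ^ k) + \<gamma> ^ (2 ^ (3 * k)))))"
proof -
  have ch: "CHAR('a) = p" using char_is_p assms(1,3) by blast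
  have fadd: "\<And>(x::'a) y n. (x + y) ^ (p ^ n) = x ^ (p ^ n) + y ^ (p ^ n)"
    by (rule freshmans_dream') (simp_all add: ch assms(1))
  have fneg: "\<And>(x::'a) n. (- x) ^ (p ^ n) = - (x ^ (p ^ n))"
  proof -
    fix x :: 'a and n
    have "(x + - x) ^ (p ^ n) = x ^ (p ^ n) + (-x) ^ (p ^ n)" by (rule fadd)
    moreover have "(0::'a) ^ (p ^ n) = 0" using assms(1) prime_gt_0_nat by simp
    ultimately show "(- x) ^ (p ^ n) = - (x ^ (p ^ n))"
      by (simp add: eq_neg_iff_add_eq_0 add.commute)
  qed
  have full: "\<And>x::'a. x ^ (p ^ (4 * k)) = x" using card_pow_same assms(3) by metis
  have k4: "4 * k div k = 4" and k2: "4 * k div (2 * k) = 2" using assms(2) by auto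
  have T1: "\<And>y::'a. rel_trace p (4 * k) k y
      = y + y ^ (p ^ k) + y ^ (p ^ (2*k)) + y ^ (p ^ (3*k))"
  proof -
    fix y :: 'a
    have "{..<4::nat} = {0,1,2,3}" by auto
    then show "rel_trace p (4 * k) k y = y + y ^ (p ^ k) + y ^ (p ^ (2*k)) + y ^ (p ^ (3*k))"
      unfolding rel_trace_def k4 by (simp add: mult.commute add.assoc)
  qed
  have T2: "\<And>y::'a. rel_trace p (4 * k) (2*k) y = y + y ^ (p ^ (2*k))"
  proof -
    fix y :: 'a
    have "{..<2::nat} = {0,1}" by auto
    then show "rel_trace p (4 * k) (2*k) y = y + y ^ (p ^ (2*k))"
      unfolding rel_trace_def k2 by (simp add: mult.commute)
  qed
  have fa: "\<And>x y. f (x + y) - f x = f y"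
    unfolding assms(4) T1 T2 by (simp only: fadd) (simp add: algebra_simps)
  have e3: "3 * k = 2 * k + k" "3*k = k + 2*k" by auto
  show ?thesis
  proof (intro conjI allI impI)
    fix \<gamma> :: 'a assume g: "\<gamma> \<noteq> 0 \<and> \<gamma> + \<gamma> ^ (p ^ (2 * k)) = 0"
    have gq: "\<gamma> ^ (p ^ (2 * k)) = - \<gamma>" using g by (simp add: eq_neg_iff_add_eq_0 add.commute)
    show "frob_translator p (2 * k) f \<gamma> 0 0"
      unfolding frob_translator_def
    proof (intro conjI ballI allI)
      show "\<gamma> \<noteq> 0" using g by simp
      show "0 \<in> subfld p (2*k)" unfolding subfld_def using assms(1) prime_gt_0_nat by simp
      show "0 < 2 * k" using assms(2) by simp
      fix x u :: 'a assume u: "u \<in> subfld p (2 * k)"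
      have uq: "u ^ (p ^ (2 * k)) = u" using u by (simp add: subfld_def)
      have y2: "(u * \<gamma>) ^ (p ^ (2*k)) = - (u * \<gamma>)" by (simp add: power_mult_distrib uq gq)
      have y3: "(u * \<gamma>) ^ (p ^ (3*k)) = - ((u * \<gamma>) ^ (p ^ k))"
      proof -
        have "(u * \<gamma>) ^ (p ^ (3*k)) = ((u * \<gamma>) ^ p ^ (2*k)) ^ p ^ k" by (simp only: pow_pow e3(1))
        then show ?thesis by (simp only: y2 fneg)
      qed
      show "f (x + u * \<gamma>) - f x = u ^ p ^ 0 * 0"
        unfolding fa unfolding assms(4) T1 T2 y2 y3 by simp
    qed
  next
    fix \<gamma> :: 'a assume p2: "p = 2" and g: "\<gamma> \<noteq> 0"
    have two: "(2::'a) = 0" using ch p2 of_nat_CHAR[where 'a='a] by simp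
    have dbl: "\<And>z::'a. z + z = 0" by (metis mult_2 two mult_zero_left)
    have "frob_translator p (2 * k) f \<gamma> k (\<gamma> ^ (p ^ k) + \<gamma> ^ (p ^ (3 * k)))"
      unfolding frob_translator_def
    proof (intro conjI ballI allI)
      show "\<gamma> \<noteq> 0" using g by simp
      show "k < 2 * k" using assms(2) by simp
      have e5: "3*k + 2*k = 4*k + k" by simp
      show "\<gamma> ^ p ^ k + \<gamma> ^ p ^ (3 * k) \<in> subfld p (2 * k)"
      proof -
        have a: "(\<gamma> ^ p ^ k) ^ p ^ (2*k) = \<gamma> ^ p ^ (3*k)"
          by (simp only: pow_pow e3(2))
        have b: "(\<gamma> ^ p ^ (3*k)) ^ p ^ (2*k) = \<gamma> ^ p ^ k"
        proof -
          have "(\<gamma> ^ p ^ (3*k)) ^ p ^ (2*k) = \<gamma> ^ p ^ (4*k+k)"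
            by (simp only: pow_pow e5)
          also have "\<dots> = (\<gamma> ^ p ^ (4*k)) ^ p ^ k" by (simp only: pow_pow)
          finally show ?thesis by (simp only: full)
        qed
        show ?thesis unfolding subfld_def by (simp only: mem_Collect_eq fadd a b add.commute)
      qed
      fix x u :: 'a assume u: "u \<in> subfld p (2 * k)"
      have uq: "u ^ (p ^ (2 * k)) = u" using u by (simp add: subfld_def)
      have u3: "u ^ (p ^ (3 * k)) = u ^ (p ^ k)"
      proof -
        have "u ^ (p ^ (3 * k)) = (u ^ p ^ (2*k)) ^ p ^ k" by (simp only: pow_pow e3(1))
        then show ?thesis by (simp only: uq)
      qed
      have "f (x + u * \<gamma>) - f x = f (u * \<gamma>)" by (rule fa)
      also have "\<dots> = (u*\<gamma> + u * \<gamma> ^ p ^ (2 * k)) + (u*\<gamma> + u * \<gamma> ^ p ^ (2 * k))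
          + u ^ p ^ k * (\<gamma> ^ p ^ k + \<gamma> ^ p ^ (3 * k))"
        unfolding assms(4) T1 T2 power_mult_distrib uq u3 by (simp only: algebra_simps)
      finally have "f (x + u * \<gamma>) - f x = (u*\<gamma> + u * \<gamma> ^ p ^ (2 * k)) + (u*\<gamma> + u * \<gamma> ^ p ^ (2 * k))
          + u ^ p ^ k * (\<gamma> ^ p ^ k + \<gamma> ^ p ^ (3 * k))" .
      then show "f (x + u * \<gamma>) - f x = u ^ p ^ k * (\<gamma> ^ p ^ k + \<gamma> ^ p ^ (3 * k))"
        by (simp add: dbl)
    qed
    then show "frob_translator p (2 * k) f \<gamma> k (\<gamma> ^ (2 ^ k) + \<gamma> ^ (2 ^ (3 * k)))"
      using p2 by simp
  qed
qed

end
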